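(* Let $f:\mathbb{R}^n\to\mathbb{R}^n$ be of class $C^1$ with $\det f'(x)\neq0$ for all $x\in\mathbb{R}^n$. Then $f$ is one-to-one if there exist points $x_0,x_1\in\mathbb{R}^n$ and nonnegative real numbers $a,b,c$ such that $$(x-x_1)\cdot F(x)\le a+b|x-x_1|^2+c|f(x)-f(x_0)|^2\qquad\forall x\in\mathbb{R}^n,$$ where $F(x):=-f'(x)^{-1}(f(x)-f(x_0))$.
   Context: $\cdot$ is the Euclidean inner product and $|\cdot|$ the Euclidean norm on $\mathbb{R}^n$. *)

theory Defs
  imports "HOL-Analysis.Analysis"
begin

end

theory Submission
  imports Defs
begin

lemma clopen_metric:
  fixes I :: "'a::metric_space set"
  assumes "connected I" "A \<subseteq> I" "s0 \<in> A"
    "\<And>s. s \<in> A \<Longrightarrow> \<exists>e>0. \<forall>s'\<in>I. dist s' s < e \<longrightarrow> s' \<in> A"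
    "\<And>s. s \<in> I \<Longrightarrow> s \<notin> A \<Longrightarrow> \<exists>e>0. \<forall>s'\<in>I. dist s' s < e \<longrightarrow> s' \<notin> A"
  shows "A = I"
proof -
  have o: "openin (top_of_set I) A" unfolding openin_euclidean_subtopology_iff
    using assms(2,4) by blast
  have o2: "openin (top_of_set I) (I - A)" unfolding openin_euclidean_subtopology_iff
  proof (intro conjI ballI)
    fix x assume "x \<in> I - A"
    then obtain e where "e>0" "\<forall>s'\<in>I. dist s' x < e \<longrightarrow> s' \<notin> A" using assms(5) by blast
    then show "\<exists>e>0. \<forall>x'\<in>I. dist x' x < e \<longrightarrow> x' \<in> I - A" by blast
  qed auto
  have c: "closedin (top_of_set I) A" unfolding closedin_def topspace_euclidean_subtopology
    using o2 assms(2) by blast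
  have "A = {} \<or> A = I" using connected_clopen[THEN iffD1, OF assms(1)] o c by blast
  then show ?thesis using assms(3) by blast
qed

lemma cont_nbhd:
  fixes g :: "'a::metric_space \<Rightarrow> 'b::metric_space"
  assumes "continuous_on I g" "s \<in> I" "open W" "g s \<in> W"
  shows "\<exists>e>0. \<forall>s'\<in>I. dist s' s < e \<longrightarrow> g s' \<in> W"
proof -
  obtain \<epsilon> where e: "\<epsilon>>0" "ball (g s) \<epsilon> \<subseteq> W" using assms(3,4) open_contains_ball by blast
  obtain d where d: "d>0" "\<forall>s'\<in>I. dist s' s < d \<longrightarrow> dist (g s') (g s) < \<epsilon>"
    using assms(1,2) e(1) unfolding continuous_on_iff by blast
  show ?thesis
  proof (intro exI conjI ballI impI)
    show "d > 0" by (rule d(1))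
    fix s' assume "s' \<in> I" "dist s' s < d"
    then have "dist (g s') (g s) < \<epsilon>" using d(2) by blast
    then have "dist (g s) (g s') < \<epsilon>" by (simp add: dist_commute)
    then show "g s' \<in> W" using e(2) by auto
  qed
qed

locale nw =
  fixes f :: "real ^ 'n \<Rightarrow> real ^ 'n"
    and f' :: "real ^ 'n \<Rightarrow> real ^ 'n ^ 'n"
  assumes deriv: "\<And>x. (f has_derivative (\<lambda>h. f' x *v h)) (at x)"
    and C1: "continuous_on UNIV f'"
    and det_nz: "\<And>x. det (f' x) \<noteq> 0"
begin

lemma contf: "continuous_on S f"
  by (meson deriv continuous_at_imp_continuous_on has_derivative_continuous)

lemma minv: "f' x ** matrix_inv (f' x) = mat 1" "matrix_inv (f' x) ** f' x = mat 1"
proof -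
  have "invertible (f' x)" using det_nz invertible_det_nz by blast
  then have "\<exists>A'. f' x ** A' = mat 1 \<and> A' ** f' x = mat 1" unfolding invertible_def by blast
  then have "f' x ** matrix_inv (f' x) = mat 1 \<and> matrix_inv (f' x) ** f' x = mat 1"
    unfolding matrix_inv_def by (rule someI_ex)
  then show "f' x ** matrix_inv (f' x) = mat 1" "matrix_inv (f' x) ** f' x = mat 1" by auto
qed

lemma minv_apply: "f' x *v (matrix_inv (f' x) *v v) = v" "matrix_inv (f' x) *v (f' x *v v) = v"
  by (simp_all add: matrix_vector_mul_assoc minv)

lemma loc_inj: obtains r where "r > 0" "inj_on f (ball p r)"
proof -
  have "\<exists>d>0. \<forall>x. dist p x < d \<longrightarrow> onorm (\<lambda>v. f' x *v v - f' p *v v) < e" if "e > 0" for e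
  proof -
    define K where "K = real CARD('n) * real CARD('n)"
    have K: "K > 0" unfolding K_def by simp
    have "continuous (at p) f'" using C1 by (simp add: continuous_on_eq_continuous_at)
    then obtain d where d: "d > 0" "\<And>x. dist x p < d \<Longrightarrow> dist (f' x) (f' p) < e / (2*K)"
      using \<open>e>0\<close> K unfolding continuous_at_eps_delta by (metis divide_pos_pos mult_pos_pos zero_less_numeral)
    show ?thesis
    proof (intro exI conjI allI impI)
      fix x assume "dist p x < d"
      then have dd: "norm (f' x - f' p) < e / (2*K)" using d by (metis dist_commute dist_norm)
      have eq: "(\<lambda>v. f' x *v v - f' p *v v) = (*v) (f' x - f' p)"
        by (rule ext) (simp add: matrix_vector_mult_diff_rdistrib)
      have "\<bar>(f' x - f' p) $ i $ j\<bar> \<le> norm (f' x - f' p)" for i j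
        by (rule order_trans[OF component_le_norm_cart Finite_Cartesian_Product.norm_nth_le])
      then have "onorm ((*v) (f' x - f' p)) \<le> K * norm (f' x - f' p)"
        unfolding K_def by (rule onorm_le_matrix_component)
      also have "\<dots> < K * (e/(2*K))" by (intro mult_strict_left_mono dd K)
      also have "\<dots> < e" using K \<open>e>0\<close> by simp
      finally show "onorm (\<lambda>v. f' x *v v - f' p *v v) < e" using eq by simp
    qed (use d in auto)
  qed
  note EPS = this
  have ID: "(*v) (matrix_inv (f' p)) \<circ> (*v) (f' p) = id"
    by (rule ext) (simp add: minv_apply)
  have D: "\<And>x. x \<in> UNIV \<Longrightarrow> (f has_derivative (*v) (f' x)) (at x)" using deriv by simp
  show ?thesis
    by (rule has_derivative_locally_injective[of p UNIV "(*v) (matrix_inv (f' p))" "\<lambda>x. (*v) (f' x)" f,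
      OF UNIV_I open_UNIV matrix_vector_mul_bounded_linear ID D EPS]) (simp_all add: that)
qed

lemma local_inv:
  obtains W N h where "open W" "p \<in> W" "open N" "homeomorphism W N f h"
    "\<And>y. y \<in> N \<Longrightarrow> (h has_derivative (\<lambda>v. matrix_inv (f' (h y)) *v v)) (at y)"
proof -
  obtain r where r: "r > 0" "inj_on f (ball p r)" by (rule loc_inj)
  define W where "W = ball p r"
  have oW: "open W" unfolding W_def by simp
  have pW: "p \<in> W" unfolding W_def using r by simp
  have inj: "inj_on f W" unfolding W_def by (rule r(2))
  have cW: "continuous_on W f" by (rule contf)
  obtain h where h: "homeomorphism W (f ` W) f h"
    by (rule invariance_of_domain_homeomorphism[OF oW cW order_refl inj])
  have oN: "open (f ` W)" by (rule invariance_of_domain[OF cW oW inj])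
  have D: "(h has_derivative (\<lambda>v. matrix_inv (f' (h y)) *v v)) (at y)" if "y \<in> f ` W" for y
  proof (rule has_derivative_inverse_strong_x[of W])
    show "open W" by (rule oW)
    show "h y \<in> W" using h that unfolding homeomorphism_def by blast
    show "continuous_on W f" by (rule contf)
    show "\<And>x. x \<in> W \<Longrightarrow> h (f x) = x" using h by (simp add: homeomorphism_def)
    show "(f has_derivative (*v) (f' (h y))) (at (h y))" using deriv by simp
    show "(*v) (f' (h y)) \<circ> (\<lambda>v. matrix_inv (f' (h y)) *v v) = id"
      by (rule ext) (simp add: minv_apply)
    show "f (h y) = y" using h that by (rule homeomorphism_apply2)
  qed
  show ?thesis by (rule that[OF oW pW oN h D])
qed

lemma lift_unique:
  fixes I :: "real set"
  assumes I: "connected I" and c1: "continuous_on I g1" and c2: "continuous_on I g2"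
    and eq: "\<forall>s\<in>I. f (g1 s) = f (g2 s)" and s0: "s0 \<in> I" "g1 s0 = g2 s0" and s: "s \<in> I"
  shows "g1 s = g2 s"
proof -
  have "{s\<in>I. g1 s = g2 s} = I"
  proof (rule clopen_metric[OF I _ _])
    show "s0 \<in> {s \<in> I. g1 s = g2 s}" using s0 by simp
    fix s assume "s \<in> {s \<in> I. g1 s = g2 s}"
    then have sI: "s \<in> I" and e: "g1 s = g2 s" by auto
    obtain W N h where W: "open W" "g1 s \<in> W" "open N" "homeomorphism W N f h"
      by (rule local_inv[of "g1 s"])
    obtain e1 where e1: "e1 > 0" "\<forall>s'\<in>I. dist s' s < e1 \<longrightarrow> g1 s' \<in> W"
      using cont_nbhd[OF c1 sI W(1,2)] by blast
    obtain e2 where e2: "e2 > 0" "\<forall>s'\<in>I. dist s' s < e2 \<longrightarrow> g2 s' \<in> W"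
      using cont_nbhd[OF c2 sI W(1)] W(2) e by auto
    show "\<exists>e>0. \<forall>s'\<in>I. dist s' s < e \<longrightarrow> s' \<in> {s \<in> I. g1 s = g2 s}"
    proof (intro exI conjI ballI impI)
      show "min e1 e2 > 0" using e1 e2 by simp
      fix s' assume "s' \<in> I" "dist s' s < min e1 e2"
      then have "g1 s' \<in> W" "g2 s' \<in> W" using e1 e2 by auto
      then have "g1 s' = h (f (g1 s'))" "g2 s' = h (f (g2 s'))"
        using homeomorphism_apply1[OF W(4)] by auto
      then show "s' \<in> {s \<in> I. g1 s = g2 s}" using eq \<open>s' \<in> I\<close> by auto
    qed
  next
    fix s assume sI: "s \<in> I" and ne: "s \<notin> {s \<in> I. g1 s = g2 s}"
    then have ne: "g1 s \<noteq> g2 s" by auto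
    define \<epsilon> where "\<epsilon> = dist (g1 s) (g2 s) / 2"
    have ep: "\<epsilon> > 0" using ne unfolding \<epsilon>_def by simp
    obtain e1 where e1: "e1 > 0" "\<forall>s'\<in>I. dist s' s < e1 \<longrightarrow> g1 s' \<in> ball (g1 s) \<epsilon>"
      using cont_nbhd[OF c1 sI, of "ball (g1 s) \<epsilon>"] ep by auto
    obtain e2 where e2: "e2 > 0" "\<forall>s'\<in>I. dist s' s < e2 \<longrightarrow> g2 s' \<in> ball (g2 s) \<epsilon>"
      using cont_nbhd[OF c2 sI, of "ball (g2 s) \<epsilon>"] ep by auto
    show "\<exists>e>0. \<forall>s'\<in>I. dist s' s < e \<longrightarrow> s' \<notin> {s \<in> I. g1 s = g2 s}"
    proof (intro exI conjI ballI impI)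
      show "min e1 e2 > 0" using e1 e2 by simp
      fix s' assume "s' \<in> I" "dist s' s < min e1 e2"
      then have "dist (g1 s) (g1 s') < \<epsilon>" "dist (g2 s) (g2 s') < \<epsilon>" using e1 e2 by auto
      moreover have "dist (g1 s) (g2 s) \<le> dist (g1 s) (g1 s') + dist (g1 s') (g2 s)" by (rule dist_triangle)
      ultimately have "g1 s' \<noteq> g2 s'" unfolding \<epsilon>_def by (auto simp: dist_commute)
      then show "s' \<notin> {s \<in> I. g1 s = g2 s}" by simp
    qed
  qed auto
  then show ?thesis using s by blast
qed

end

locale nw2 = nw f f' for f :: "real ^ 'n \<Rightarrow> real ^ 'n" and f' +
  fixes x0 x1 :: "real ^ 'n" and a b c :: real
  assumes abc: "a \<ge> 0" "b \<ge> 0" "c \<ge> 0"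
    and ineq: "\<And>x. (x - x1) \<bullet> (- (matrix_inv (f' x) *v (f x - f x0)))
                 \<le> a + b * (norm (x - x1))\<^sup>2 + c * (norm (f x - f x0))\<^sup>2"
begin

definition "zz x s = f x0 + s *\<^sub>R (f x - f x0)"

definition "islift x t g \<longleftrightarrow> continuous_on {t..1} g \<and> g 1 = x \<and> (\<forall>s\<in>{t..1}. f (g s) = zz x s)"

lemma zz_cont: "continuous_on S (zz x)"
  unfolding zz_def by (intro continuous_intros)

lemma zz_deriv: "(zz x has_vector_derivative (f x - f x0)) (at s)"
  unfolding zz_def has_vector_derivative_def by (auto intro!: derivative_eq_intros)

lemma lift_deriv:
  assumes L: "islift x t g" and s: "t < s" "s < 1"
  shows "(g has_vector_derivative (matrix_inv (f' (g s)) *v (f x - f x0))) (at s)"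
proof -
  obtain W N h where W: "open W" "g s \<in> W" "open N" "homeomorphism W N f h"
    and hd: "\<And>y. y \<in> N \<Longrightarrow> (h has_derivative (\<lambda>v. matrix_inv (f' (h y)) *v v)) (at y)"
    using local_inv[of "g s"] by blast
  have cg: "continuous_on {t..1} g" using L unfolding islift_def by simp
  obtain e1 where e1: "e1 > 0" "\<forall>s'\<in>{t..1}. dist s' s < e1 \<longrightarrow> g s' \<in> W"
    using cont_nbhd[OF cg _ W(1,2)] s by auto
  define e where "e = min e1 (min (s - t) (1 - s))"
  have ep: "e > 0" using e1 s unfolding e_def by simp
  have agree: "(h \<circ> zz x) s' = g s'" if "s' \<in> ball s e" for s'
  proof -
    have "s' \<in> {t..1}" "dist s' s < e1" using that unfolding e_def by (auto simp: dist_real_def)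
    then have "g s' \<in> W" "f (g s') = zz x s'" using e1 L unfolding islift_def by auto
    then show ?thesis using homeomorphism_apply1[OF W(4), of "g s'"] by simp
  qed
  have gs: "f (g s) = zz x s" using L s unfolding islift_def by auto
  have zN: "zz x s \<in> N" using W(2) homeomorphism_image1[OF W(4)] gs by (metis imageI)
  have hz: "h (zz x s) = g s" using gs homeomorphism_apply1[OF W(4) W(2)] by simp
  have "((h \<circ> zz x) has_derivative ((\<lambda>v. matrix_inv (f' (g s)) *v v) \<circ> (\<lambda>r. r *\<^sub>R (f x - f x0)))) (at s)"
    using diff_chain_at[OF zz_deriv[of x s, unfolded has_vector_derivative_def] hd[OF zN]] hz by simp
  then have "((h \<circ> zz x) has_vector_derivative (matrix_inv (f' (g s)) *v (f x - f x0))) (at s)"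
    unfolding has_vector_derivative_def by (simp add: o_def matrix_vector_mult_scaleR)
  then show ?thesis
    by (rule has_vector_derivative_transform_within_open[OF _ open_ball]) (use ep agree in auto)
qed

lemma lift_bound:
  assumes t: "0 < t" "t \<le> 1" and L: "islift x t g" and \<sigma>: "\<sigma> \<in> {t..1}"
  shows "(norm (g \<sigma> - x1))\<^sup>2 \<le> ((norm (x - x1))\<^sup>2 + (a + c * (norm (f x - f x0))\<^sup>2) / (b+1)) * exp (2*(b+1)/t)"
proof -
  define v where "v = f x - f x0"
  define K where "K = (norm v)\<^sup>2"
  define D where "D = (a + c*K)/(b+1)"
  define Lc where "Lc = 2*(b+1)/t"
  define r where "r = (\<lambda>s. (g s - x1) \<bullet> (g s - x1))"
  define \<phi> where "\<phi> = (\<lambda>s. (r s + D) * exp (Lc * s))"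
  have b1: "b + 1 > 0" using abc by simp
  have K0: "K \<ge> 0" unfolding K_def by simp
  have D0: "D \<ge> 0" unfolding D_def using abc K0 b1 by simp
  have Lc0: "Lc > 0" unfolding Lc_def using b1 t by simp
  have r0: "r s \<ge> 0" for s unfolding r_def by simp
  have rn: "r s = (norm (g s - x1))\<^sup>2" for s unfolding r_def by (simp add: power2_norm_eq_inner)
  have cg: "continuous_on {t..1} g" using L unfolding islift_def by simp
  have rc: "continuous_on {t..1} r" unfolding r_def by (intro continuous_intros cg)
  have phic: "continuous_on {\<sigma>..1} \<phi>" unfolding \<phi>_def
    by (intro continuous_intros continuous_on_subset[OF rc]) (use \<sigma> in auto)
  have dphi: "\<exists>y. DERIV \<phi> s :> y \<and> y \<ge> 0" if s: "\<sigma> < s" "s < 1" for s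
  proof -
    have ts: "t < s" using s \<sigma> by simp
    define d where "d = matrix_inv (f' (g s)) *v v"
    have gd: "(g has_vector_derivative d) (at s)" using lift_deriv[OF L ts s(2)] unfolding d_def v_def .
    have "(r has_derivative (\<lambda>h. (g s - x1) \<bullet> (h *\<^sub>R d) + (h *\<^sub>R d) \<bullet> (g s - x1))) (at s)"
      using gd unfolding has_vector_derivative_def r_def by (auto intro!: derivative_eq_intros)
    moreover have "(\<lambda>h. (g s - x1) \<bullet> (h *\<^sub>R d) + (h *\<^sub>R d) \<bullet> (g s - x1)) = (*) (2 * ((g s - x1) \<bullet> d))"
      by (rule ext) (simp add: inner_commute algebra_simps)
    ultimately have rd: "DERIV r s :> 2 * ((g s - x1) \<bullet> d)" unfolding has_field_derivative_def by simp
    have ed: "DERIV (\<lambda>s. exp (Lc * s)) s :> exp (Lc * s) * Lc"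
      by (auto intro!: derivative_eq_intros)
    have pd: "DERIV \<phi> s :> 2 * ((g s - x1) \<bullet> d) * exp (Lc * s) + (r s + D) * (exp (Lc * s) * Lc)"
    proof -
      have rD: "DERIV (\<lambda>s. r s + D) s :> 2 * ((g s - x1) \<bullet> d)"
        using DERIV_add[OF rd DERIV_const[of D "at s"]] by simp
      show ?thesis unfolding \<phi>_def using DERIV_mult'[OF rD ed] by (simp add: algebra_simps)
    qed
    define P where "P = (g s - x1) \<bullet> d"
    define R where "R = r s"
    define Q where "Q = (b+1)*R + a + c*K"
    have fg: "f (g s) - f x0 = s *\<^sub>R v" using L ts s unfolding islift_def zz_def v_def by auto
    have sP: "s * P = (g s - x1) \<bullet> (matrix_inv (f' (g s)) *v (f (g s) - f x0))"
      unfolding P_def d_def fg by (simp add: matrix_vector_mult_scaleR)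
    have nf: "(norm (f (g s) - f x0))\<^sup>2 = s\<^sup>2 * K" unfolding fg K_def
      using ts t by (simp add: power_mult_distrib)
    have "- (s * P) \<le> a + b * R + c * (s\<^sup>2 * K)"
      using ineq[of "g s"] unfolding sP nf R_def rn by (simp add: inner_minus_right)
    moreover have "c * (s\<^sup>2 * K) \<le> c * K"
    proof -
      have "s\<^sup>2 \<le> 1" using ts t s by (simp add: power_le_one)
      then have "s\<^sup>2 * K \<le> K" using K0 by (simp add: mult_left_le_one_le)
      then show ?thesis using abc by (simp add: mult_left_mono)
    qed
    moreover have "0 \<le> R" unfolding R_def by (rule r0)
    ultimately have sPQ: "- (s * P) \<le> Q" unfolding Q_def distrib_right by linarith
    have tPQ: "- (t * P) \<le> Q"
    proof (cases "P \<ge> 0")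
      case True
      then have "0 \<le> t * P" using t by simp
      moreover have "0 \<le> Q" unfolding Q_def using \<open>0 \<le> R\<close> abc K0 b1 by simp
      ultimately show ?thesis by simp
    next
      case False
      then have "s * P \<le> t * P" using ts by (simp add: mult_right_mono_neg)
      then show ?thesis using sPQ by simp
    qed
    have e1: "(b+1)*D = a + c*K" unfolding D_def using b1 by simp
    have "Lc * (r s + D) = 2 / t * ((b+1) * r s + (b+1)*D)" unfolding Lc_def
      by (simp add: algebra_simps add_divide_distrib)
    also have "\<dots> = 2 * Q / t" unfolding e1 Q_def R_def by (simp add: add.assoc)
    finally have "Lc * (r s + D) = 2 * Q / t" .
    moreover have "0 \<le> 2 * P + 2 * Q / t"
    proof -
      have "- P \<le> Q / t" using tPQ t by (simp add: field_simps)
      then show ?thesis by simp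
    qed
    ultimately have "0 \<le> 2 * P + Lc * (r s + D)" by simp
    then have "0 \<le> (2 * P + Lc * (r s + D)) * exp (Lc * s)" by simp
    moreover have "(2 * P + Lc * (r s + D)) * exp (Lc * s) =
       2 * ((g s - x1) \<bullet> d) * exp (Lc * s) + (r s + D) * (exp (Lc * s) * Lc)"
      unfolding P_def by (simp add: algebra_simps)
    ultimately show ?thesis using pd by auto
  qed
  have "\<phi> \<sigma> \<le> \<phi> 1"
    by (rule DERIV_nonneg_imp_increasing_open[OF _ dphi phic]) (use \<sigma> in auto)
  moreover have "r \<sigma> \<le> \<phi> \<sigma>"
  proof -
    have "1 \<le> exp (Lc * \<sigma>)" using Lc0 \<sigma> t by simp
    then have "(r \<sigma> + D) * 1 \<le> (r \<sigma> + D) * exp (Lc * \<sigma>)"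
      using r0 D0 by (intro mult_left_mono) (auto simp: add_nonneg_nonneg)
    then show ?thesis unfolding \<phi>_def using D0 by simp
  qed
  moreover have "r 1 = (norm (x - x1))\<^sup>2" using L unfolding rn islift_def by simp
  ultimately show ?thesis unfolding \<phi>_def rn D_def K_def v_def Lc_def by simp
qed

lemma local_inv2:
  obtains W N h where "open W" "p \<in> W" "open N" "homeomorphism W N f h"
proof -
  obtain W N h where W: "open W" "p \<in> W" "open N" "homeomorphism W N f h"
    and hd: "\<And>y. y \<in> N \<Longrightarrow> (h has_derivative (\<lambda>v. matrix_inv (f' (h y)) *v v)) (at y)"
    using local_inv[of p] by blast
  show ?thesis using that W by blast
qed

lemma glue:
  assumes L: "islift x s g" and ts: "t \<le> s" and s1: "s \<le> 1"
    and H: "homeomorphism W N f h" and gW: "g s \<in> W" and zN: "\<forall>\<sigma>\<in>{t..s}. zz x \<sigma> \<in> N"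
  shows "islift x t (\<lambda>\<sigma>. if \<sigma> \<le> s then h (zz x \<sigma>) else g \<sigma>)"
proof -
  have gs: "f (g s) = zz x s" using L s1 ts unfolding islift_def by auto
  have hs: "h (zz x s) = g s" using homeomorphism_apply1[OF H gW] gs by simp
  have e1: "{\<sigma>\<in>{t..1}. \<sigma> \<le> s} = {t..s}" using s1 by auto
  have ch: "continuous_on {\<sigma>\<in>{t..1}. \<sigma> \<le> s} (\<lambda>\<sigma>. h (zz x \<sigma>))" unfolding e1
    by (rule continuous_on_compose2[OF homeomorphism_cont2[OF H] zz_cont]) (use zN in auto)
  have cg0: "continuous_on {s..1} g" using L unfolding islift_def by simp
  have cg: "continuous_on {\<sigma>\<in>{t..1}. s \<le> \<sigma>} g"
    by (rule continuous_on_subset[OF cg0]) auto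
  have cont: "continuous_on {t..1} (\<lambda>\<sigma>. if \<sigma> \<le> s then h (zz x \<sigma>) else g \<sigma>)"
    by (rule continuous_on_cases_le[where h="\<lambda>\<sigma>. \<sigma>", OF ch cg continuous_on_id]) (use hs in auto)
  have one: "(if (1::real) \<le> s then h (zz x 1) else g 1) = x"
    using hs s1 L unfolding islift_def by auto
  have lift: "f (if \<sigma> \<le> s then h (zz x \<sigma>) else g \<sigma>) = zz x \<sigma>" if "\<sigma> \<in> {t..1}" for \<sigma>
  proof (cases "\<sigma> \<le> s")
    case True
    then have "zz x \<sigma> \<in> N" using zN that by auto
    then show ?thesis using True homeomorphism_apply2[OF H] by simp
  next
    case False
    then show ?thesis using L that unfolding islift_def by auto
  qed
  show ?thesis unfolding islift_def using cont one lift by simp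
qed

lemma lift_upward: "islift x t g \<Longrightarrow> t \<le> t' \<Longrightarrow> islift x t' g"
  unfolding islift_def by (auto intro: continuous_on_subset)

lemma zz_one: "zz x 1 = f x" unfolding zz_def by simp

lemma lift_exists:
  assumes "t \<in> {0<..1}" shows "\<exists>g. islift x t g"
proof -
  define T where "T = {t\<in>{0<..(1::real)}. \<exists>g. islift x t g}"
  have up: "t' \<in> T" if A: "t \<in> T" "t \<le> t'" "t' \<le> 1" for t t'
  proof -
    obtain g where "islift x t g" "0 < t" using A(1) unfolding T_def by auto
    then have "islift x t' g" "0 < t'" using lift_upward[of x t g t'] A(2) by auto
    then show ?thesis unfolding T_def using A(3) by auto
  qed
  have "T = {0<..1}"
  proof (rule clopen_metric[OF connected_Ioc])
    show "T \<subseteq> {0<..1}" unfolding T_def by auto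
    have "islift x 1 (\<lambda>_. x)" unfolding islift_def by (simp add: zz_one)
    then show "1 \<in> T" unfolding T_def by auto
  next
    fix t assume "t \<in> T"
    then obtain g where t: "0 < t" "t \<le> 1" and L: "islift x t g" unfolding T_def by auto
    obtain W N h where W: "open W" "g t \<in> W" "open N" "homeomorphism W N f h"
      by (rule local_inv2[of "g t"])
    have "f (g t) = zz x t" using L t unfolding islift_def by auto
    then have ztN: "zz x t \<in> N" using W(2) homeomorphism_image1[OF W(4)] by (metis imageI)
    obtain \<eta> where \<eta>: "\<eta> > 0" "\<forall>s\<in>UNIV. dist s t < \<eta> \<longrightarrow> zz x s \<in> N"
      using cont_nbhd[OF zz_cont[of UNIV x] UNIV_I W(3) ztN] by blast
    show "\<exists>e>0. \<forall>s'\<in>{0<..1}. dist s' t < e \<longrightarrow> s' \<in> T"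
    proof (intro exI conjI ballI impI)
      show "\<eta> > 0" by (rule \<eta>(1))
      fix s' assume s': "s' \<in> {0<..1}" "dist s' t < \<eta>"
      show "s' \<in> T"
      proof (cases "t \<le> s'")
        case True show ?thesis by (rule up[OF \<open>t \<in> T\<close> True]) (use s' in simp)
      next
        case False
        have zN: "\<forall>\<sigma>\<in>{s'..t}. zz x \<sigma> \<in> N"
        proof
          fix \<sigma> assume "\<sigma> \<in> {s'..t}"
          then have "dist \<sigma> t < \<eta>" using s' False by (auto simp: dist_real_def)
          then show "zz x \<sigma> \<in> N" using \<eta> by auto
        qed
        have "islift x s' (\<lambda>\<sigma>. if \<sigma> \<le> t then h (zz x \<sigma>) else g \<sigma>)"
          by (rule glue[OF L _ t(2) W(4) W(2) zN]) (use False in linarith)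
        then show ?thesis using s' unfolding T_def by auto
      qed
    qed
  next
    fix t assume tI: "t \<in> {0<..1::real}" and tT: "t \<notin> T"
    show "\<exists>e>0. \<forall>s'\<in>{0<..1}. dist s' t < e \<longrightarrow> s' \<notin> T"
    proof (rule ccontr)
      assume "\<not> ?thesis"
      then have "\<forall>e>0. \<exists>s'\<in>T. dist s' t < e" by blast
      then have "\<forall>k::nat. \<exists>s'. s' \<in> T \<and> dist s' t < 1 / (real k + 1)"
      proof (intro allI)
        fix k :: nat assume H: "\<forall>e>0. \<exists>s'\<in>T. dist s' t < e"
        have "1 / (real k + 1) > 0" by simp
        then show "\<exists>s'. s' \<in> T \<and> dist s' t < 1 / (real k + 1)" using H by blast
      qed
      then obtain S where S: "\<And>k. S k \<in> T" "\<And>k. dist (S k) t < 1 / (real k + 1)" by metis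
      have St: "t < S k" for k
      proof (rule ccontr)
        assume "\<not> t < S k"
        then have "t \<in> T" using up[OF S(1)[of k]] tI by auto
        then show False using tT by simp
      qed
      have "\<forall>k. \<exists>g. islift x (S k) g" using S(1) unfolding T_def by auto
      then obtain G where G: "\<And>k. islift x (S k) (G k)" by metis
      define q where "q k = G k (S k)" for k
      define Bd where "Bd = ((norm (x - x1))\<^sup>2 + (a + c * (norm (f x - f x0))\<^sup>2) / (b+1)) * exp (2*(b+1)/t)"
      have qB: "q k \<in> cball x1 (sqrt Bd)" for k
      proof -
        have Sk: "0 < S k" "S k \<le> 1" using S(1)[of k] unfolding T_def by auto
        have "(norm (q k - x1))\<^sup>2 \<le> ((norm (x - x1))\<^sup>2 + (a + c * (norm (f x - f x0))\<^sup>2) / (b+1)) * exp (2*(b+1)/S k)"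
          unfolding q_def by (rule lift_bound[OF Sk G]) (use Sk in auto)
        also have "\<dots> \<le> Bd" unfolding Bd_def
        proof (rule mult_left_mono)
          have "2*(b+1)/S k \<le> 2*(b+1)/t" using St[of k] tI abc by (intro divide_left_mono) auto
          then show "exp (2*(b+1)/S k) \<le> exp (2*(b+1)/t)" by simp
          show "0 \<le> (norm (x - x1))\<^sup>2 + (a + c * (norm (f x - f x0))\<^sup>2) / (b+1)"
            using abc by (intro add_nonneg_nonneg divide_nonneg_nonneg) auto
        qed
        finally have "norm (q k - x1) \<le> sqrt Bd" by (rule real_le_rsqrt)
        then show ?thesis by (simp add: dist_norm norm_minus_commute)
      qed
      obtain l r where l: "strict_mono r" "(q \<circ> r) \<longlonglongrightarrow> l"
        using compact_imp_seq_compact[OF compact_cball] qB unfolding seq_compact_def by metis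
      have Slim: "S \<longlonglongrightarrow> t"
      proof (rule LIMSEQ_I)
        fix \<epsilon>::real assume "\<epsilon> > 0"
        then obtain k0::nat where "inverse (real (Suc k0)) < \<epsilon>"
          using reals_Archimedean by blast
        then have k0: "1 / (real k0 + 1) < \<epsilon>" by (simp add: inverse_eq_divide add.commute)
        show "\<exists>no. \<forall>n\<ge>no. norm (S n - t) < \<epsilon>"
        proof (intro exI allI impI)
          fix n assume "k0 \<le> n"
          then have "1 / (real n + 1) \<le> 1 / (real k0 + 1)" by (intro divide_left_mono) auto
          then show "norm (S n - t) < \<epsilon>" using S(2)[of n] k0 by (simp add: dist_norm)
        qed
      qed
      have Srlim: "(S \<circ> r) \<longlonglongrightarrow> t" by (rule LIMSEQ_subseq_LIMSEQ[OF Slim l(1)])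
      have "(\<lambda>k. zz x ((S \<circ> r) k)) \<longlonglongrightarrow> zz x t"
        unfolding zz_def by (intro tendsto_intros Srlim)
      moreover have "(\<lambda>k. f ((q \<circ> r) k)) \<longlonglongrightarrow> f l"
        by (rule isCont_tendsto_compose[OF _ l(2)]) (use contf[of UNIV] in \<open>simp add: continuous_on_eq_continuous_at\<close>)
      moreover have "f ((q \<circ> r) k) = zz x ((S \<circ> r) k)" for k
        using G[of "r k"] S(1)[of "r k"] unfolding q_def islift_def T_def by auto
      ultimately have fl: "f l = zz x t" using LIMSEQ_unique by auto
      obtain W N h where W: "open W" "l \<in> W" "open N" "homeomorphism W N f h"
        by (rule local_inv2[of l])
      have ztN: "zz x t \<in> N" using fl W(2) homeomorphism_image1[OF W(4)] by (metis imageI)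
      obtain \<eta> where \<eta>: "\<eta> > 0" "\<forall>s\<in>UNIV. dist s t < \<eta> \<longrightarrow> zz x s \<in> N"
        using cont_nbhd[OF zz_cont[of UNIV x] UNIV_I W(3) ztN] by blast
      have ev1: "eventually (\<lambda>k. (q \<circ> r) k \<in> W) sequentially"
        using l(2) W(1,2) by (rule topological_tendstoD)
      have ev2: "eventually (\<lambda>k. dist ((S \<circ> r) k) t < \<eta>) sequentially"
        using Srlim \<eta>(1) by (rule tendstoD)
      obtain k where k: "(q \<circ> r) k \<in> W" "dist ((S \<circ> r) k) t < \<eta>"
        using eventually_happens'[OF _ eventually_conj[OF ev1 ev2]] by auto
      define s where "s = S (r k)"
      have s: "t < s" "s \<le> 1" "G (r k) s \<in> W" "dist s t < \<eta>"
        using k St[of "r k"] S(1)[of "r k"] unfolding s_def q_def T_def by auto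
      have zN: "\<forall>\<sigma>\<in>{t..s}. zz x \<sigma> \<in> N"
      proof
        fix \<sigma> assume "\<sigma> \<in> {t..s}"
        then have "dist \<sigma> t < \<eta>" using s by (auto simp: dist_real_def)
        then show "zz x \<sigma> \<in> N" using \<eta> by auto
      qed
      have "islift x t (\<lambda>\<sigma>. if \<sigma> \<le> s then h (zz x \<sigma>) else G (r k) \<sigma>)"
        by (rule glue[OF G[of "r k", folded s_def] _ s(2) W(4) s(3) zN]) (use s(1) in linarith)
      then have "t \<in> T" using tI unfolding T_def by auto
      then show False using tT by simp
    qed
  qed
  then show ?thesis using assms unfolding T_def by auto
qed

lemma lift_agree:
  assumes L1: "islift x t g1" and L2: "islift x t' g2" and \<sigma>: "max t t' \<le> \<sigma>" "\<sigma> \<le> 1"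
  shows "g1 \<sigma> = g2 \<sigma>"
proof (rule lift_unique[of "{max t t'..1}" g1 g2 1 \<sigma>])
  show "connected {max t t'..1::real}" by simp
  show "continuous_on {max t t'..1} g1" using L1 unfolding islift_def
    by (metis continuous_on_subset atLeastatMost_subset_iff max.cobounded1 order_refl)
  show "continuous_on {max t t'..1} g2" using L2 unfolding islift_def
    by (metis continuous_on_subset atLeastatMost_subset_iff max.cobounded2 order_refl)
  show "\<forall>s\<in>{max t t'..1}. f (g1 s) = f (g2 s)" using L1 L2 unfolding islift_def by auto
  show "1 \<in> {max t t'..1::real}" using \<sigma> by simp
  show "g1 1 = g2 1" using L1 L2 unfolding islift_def by simp
  show "\<sigma> \<in> {max t t'..1}" using \<sigma> by simp
qed

definition "LG x t = (SOME g. islift x t g)"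
definition "Lf x s = LG x s s"

lemma LG_lift: assumes "0 < t" "t \<le> 1" shows "islift x t (LG x t)"
proof -
  obtain g where "islift x t g" using lift_exists[of t x] assms by auto
  then show ?thesis unfolding LG_def by (rule someI[of "islift x t"])
qed

lemma Lf_eq: assumes "0 < t" "t \<le> s" "s \<le> 1" shows "Lf x s = LG x t s"
  unfolding Lf_def using lift_agree[OF LG_lift[of s x] LG_lift[of t x], of s] assms by simp

lemma Lf_one: "Lf x 1 = x"
  using LG_lift[of 1 x] unfolding Lf_def islift_def by simp

lemma Lf_lift: "s \<in> {0<..1} \<Longrightarrow> f (Lf x s) = zz x s"
  using LG_lift[of s x] unfolding Lf_def islift_def by auto

lemma Lf_cont: "continuous_on {0<..1} (Lf x)"
  unfolding continuous_on_iff
proof (intro ballI allI impI)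
  fix \<sigma> e :: real assume \<sigma>: "\<sigma> \<in> {0<..1}" and e: "e > 0"
  define t where "t = \<sigma> / 2"
  have t: "0 < t" "t \<le> 1" "t < \<sigma>" using \<sigma> unfolding t_def by auto
  have C: "continuous_on {t..1} (LG x t)" using LG_lift[OF t(1,2)] unfolding islift_def by simp
  have \<sigma>t: "\<sigma> \<in> {t..1}" using \<sigma> t by simp
  obtain d where d: "d > 0" "\<forall>\<sigma>'\<in>{t..1}. dist \<sigma>' \<sigma> < d \<longrightarrow> dist (LG x t \<sigma>') (LG x t \<sigma>) < e"
    using C[unfolded continuous_on_iff, rule_format, OF \<sigma>t e] by blast
  show "\<exists>d>0. \<forall>\<sigma>'\<in>{0<..1}. dist \<sigma>' \<sigma> < d \<longrightarrow> dist (Lf x \<sigma>') (Lf x \<sigma>) < e"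
  proof (intro exI conjI ballI impI)
    show "min d t > 0" using d t by simp
    fix \<sigma>' assume \<sigma>': "\<sigma>' \<in> {0<..1}" "dist \<sigma>' \<sigma> < min d t"
    then have h: "\<bar>\<sigma>' - \<sigma>\<bar> < t" by (simp add: dist_real_def)
    have "\<sigma> - \<sigma>' < t" using h by (simp add: abs_less_iff)
    then have "\<sigma>' \<in> {t..1}" using \<sigma>'(1) unfolding t_def by simp
    moreover have "Lf x \<sigma>' = LG x t \<sigma>'" using Lf_eq[of t \<sigma>' x] t calculation by simp
    moreover have "Lf x \<sigma> = LG x t \<sigma>" using Lf_eq[of t \<sigma> x] t \<sigma> by simp
    ultimately show "dist (Lf x \<sigma>') (Lf x \<sigma>) < e" using d \<sigma>' by simp
  qed
qed

lemma zz_dist: "0 \<le> \<sigma> \<Longrightarrow> \<sigma> \<le> 1 \<Longrightarrow> dist (zz y \<sigma>) (zz x \<sigma>) \<le> dist (f y) (f x)"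
proof -
  assume s: "0 \<le> \<sigma>" "\<sigma> \<le> 1"
  have "zz y \<sigma> - zz x \<sigma> = \<sigma> *\<^sub>R (f y - f x)" unfolding zz_def by (simp add: algebra_simps)
  then have "dist (zz y \<sigma>) (zz x \<sigma>) = \<sigma> * dist (f y) (f x)" using s by (simp add: dist_norm)
  also have "\<dots> \<le> dist (f y) (f x)" using s by (simp add: mult_left_le_one_le)
  finally show ?thesis .
qed

lemma zz_dist0: "0 \<le> \<sigma> \<Longrightarrow> dist (zz y \<sigma>) (f x0) = \<sigma> * norm (f y - f x0)"
  unfolding zz_def by (simp add: dist_norm)

definition "CDp x s \<longleftrightarrow> (\<forall>\<epsilon>>0. \<exists>\<delta>>0. \<forall>y. dist y x < \<delta> \<longrightarrow> dist (Lf y s) (Lf x s) < \<epsilon>)"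

lemma cd_prop:
  assumes s: "s \<in> {0<..1}"
  shows "\<exists>\<eta>>0. \<forall>s1\<in>{0<..1}. \<forall>s2\<in>{0<..1}. dist s1 s < \<eta> \<longrightarrow> dist s2 s < \<eta> \<longrightarrow> CDp x s1 \<longrightarrow> CDp x s2"
proof -
  obtain W N h where W: "open W" "Lf x s \<in> W" "open N" "homeomorphism W N f h"
    by (rule local_inv2[of "Lf x s"])
  have fs: "f (Lf x s) = zz x s" by (rule Lf_lift[OF s])
  have zsN: "zz x s \<in> N" using W(2) homeomorphism_image1[OF W(4)] fs by (metis imageI)
  obtain \<rho> where \<rho>: "\<rho> > 0" "ball (zz x s) \<rho> \<subseteq> N" using W(3) zsN open_contains_ball by blast
  obtain \<eta>1 where \<eta>1: "\<eta>1 > 0" "\<forall>s'\<in>{0<..1}. dist s' s < \<eta>1 \<longrightarrow> Lf x s' \<in> W"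
    using cont_nbhd[OF Lf_cont s W(1,2)] by blast
  have zb: "zz x s \<in> ball (zz x s) (\<rho>/2)" using \<rho> by simp
  obtain \<eta>2 where \<eta>2: "\<eta>2 > 0" "\<forall>s'\<in>UNIV. dist s' s < \<eta>2 \<longrightarrow> zz x s' \<in> ball (zz x s) (\<rho>/2)"
    using cont_nbhd[OF zz_cont[of UNIV x] UNIV_I open_ball zb] by blast
  have hc: "continuous_on N h" by (rule homeomorphism_cont2[OF W(4)])
  show ?thesis
  proof (intro exI conjI ballI impI)
    show "min \<eta>1 \<eta>2 > 0" using \<eta>1 \<eta>2 by simp
    fix s1 s2 assume s1: "s1 \<in> {0<..1}" and s2: "s2 \<in> {0<..1}"
      and d1: "dist s1 s < min \<eta>1 \<eta>2" and d2: "dist s2 s < min \<eta>1 \<eta>2" and C1: "CDp x s1"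
    define I where "I = {min s1 s2..max s1 s2}"
    have II: "\<sigma> \<in> {0<..1}" "dist \<sigma> s < min \<eta>1 \<eta>2" if "\<sigma> \<in> I" for \<sigma>
    proof -
      have "min s1 s2 \<le> \<sigma>" "\<sigma> \<le> max s1 s2" using that unfolding I_def by auto
      then show "\<sigma> \<in> {0<..1}" using s1 s2 by auto
      show "dist \<sigma> s < min \<eta>1 \<eta>2"
        using \<open>min s1 s2 \<le> \<sigma>\<close> \<open>\<sigma> \<le> max s1 s2\<close> d1 d2 by (auto simp: dist_real_def abs_less_iff)
    qed
    have x2W: "Lf x s2 \<in> W" using \<eta>1 s2 d2 by auto
    have fx2: "f (Lf x s2) = zz x s2" by (rule Lf_lift[OF s2])
    have zx2N: "zz x s2 \<in> N" using x2W homeomorphism_image1[OF W(4)] fx2 by (metis imageI)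
    have hx2: "h (zz x s2) = Lf x s2" using homeomorphism_apply1[OF W(4) x2W] fx2 by simp
    have x1W: "Lf x s1 \<in> W" using \<eta>1 s1 d1 by auto
    show "CDp x s2" unfolding CDp_def
    proof (intro allI impI)
      fix \<epsilon> :: real assume \<epsilon>: "\<epsilon> > 0"
      obtain \<epsilon>' where \<epsilon>': "\<epsilon>' > 0" "\<forall>u\<in>N. dist u (zz x s2) < \<epsilon>' \<longrightarrow> dist (h u) (h (zz x s2)) < \<epsilon>"
        using hc[unfolded continuous_on_iff, rule_format, OF zx2N \<epsilon>] by blast
      obtain \<epsilon>1 where \<epsilon>1: "\<epsilon>1 > 0" "ball (Lf x s1) \<epsilon>1 \<subseteq> W" using W(1) x1W open_contains_ball by blast
      obtain \<delta>1 where \<delta>1: "\<delta>1 > 0" "\<forall>y. dist y x < \<delta>1 \<longrightarrow> dist (Lf y s1) (Lf x s1) < \<epsilon>1"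
        using C1 \<epsilon>1(1) unfolding CDp_def by blast
      have mpos: "min (\<rho>/2) \<epsilon>' > 0" using \<rho> \<epsilon>' by simp
      have "continuous (at x) f" using contf[of UNIV] by (simp add: continuous_on_eq_continuous_at)
      then obtain \<delta>2 where \<delta>2: "\<delta>2 > 0" "\<forall>y. dist y x < \<delta>2 \<longrightarrow> dist (f y) (f x) < min (\<rho>/2) \<epsilon>'"
        using mpos unfolding continuous_at_eps_delta by blast
      show "\<exists>\<delta>>0. \<forall>y. dist y x < \<delta> \<longrightarrow> dist (Lf y s2) (Lf x s2) < \<epsilon>"
      proof (intro exI conjI allI impI)
        show "min \<delta>1 \<delta>2 > 0" using \<delta>1 \<delta>2 by simp
        fix y assume y: "dist y x < min \<delta>1 \<delta>2"
        have fyx: "dist (f y) (f x) < min (\<rho>/2) \<epsilon>'" using \<delta>2 y by auto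
        have zyN: "zz y \<sigma> \<in> N" if "\<sigma> \<in> I" for \<sigma>
        proof -
          have "\<sigma> \<in> {0<..1}" "dist \<sigma> s < \<eta>2" using II[OF that] by auto
          then have a1: "dist (zz x \<sigma>) (zz x s) < \<rho>/2" using \<eta>2 by (simp add: dist_commute)
          have "dist (zz y \<sigma>) (zz x \<sigma>) \<le> dist (f y) (f x)" using \<open>\<sigma> \<in> {0<..1}\<close> by (intro zz_dist) auto
          then have a2: "dist (zz y \<sigma>) (zz x \<sigma>) < \<rho>/2" using fyx by simp
          have "dist (zz x s) (zz y \<sigma>) < \<rho>" using a1 a2 dist_triangle[of "zz x s" "zz y \<sigma>" "zz x \<sigma>"]
            by (simp add: dist_commute)
          then show ?thesis using \<rho>(2) by auto
        qed
        have y1W: "Lf y s1 \<in> W"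
        proof -
          have "dist (Lf y s1) (Lf x s1) < \<epsilon>1" using \<delta>1 y by auto
          then show ?thesis using \<epsilon>1(2) by (auto simp: dist_commute)
        qed
        have "Lf y s2 = (h \<circ> zz y) s2"
        proof (rule lift_unique[of I "Lf y" "h \<circ> zz y" s1 s2])
          show "connected I" unfolding I_def by simp
          show "continuous_on I (Lf y)"
            by (rule continuous_on_subset[OF Lf_cont]) (use II in auto)
          show "continuous_on I (h \<circ> zz y)"
            by (rule continuous_on_compose[OF zz_cont continuous_on_subset[OF hc]]) (use zyN in auto)
          show "\<forall>s\<in>I. f (Lf y s) = f ((h \<circ> zz y) s)"
          proof
            fix \<sigma> assume "\<sigma> \<in> I"
            then show "f (Lf y \<sigma>) = f ((h \<circ> zz y) \<sigma>)"
              using Lf_lift[OF II(1)] zyN homeomorphism_apply2[OF W(4)] by simp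
          qed
          show "s1 \<in> I" "s2 \<in> I" unfolding I_def by auto
          show "Lf y s1 = (h \<circ> zz y) s1"
            using homeomorphism_apply1[OF W(4) y1W] Lf_lift[OF s1] by simp
        qed
        then have ey: "Lf y s2 = h (zz y s2)" by simp
        have "s2 \<in> I" unfolding I_def by auto
        have "dist (zz y s2) (zz x s2) \<le> dist (f y) (f x)" using s2 by (intro zz_dist) auto
        then have "dist (zz y s2) (zz x s2) < \<epsilon>'" using fyx by simp
        then have "dist (h (zz y s2)) (h (zz x s2)) < \<epsilon>" using \<epsilon>'(2) zyN[OF \<open>s2 \<in> I\<close>] by blast
        then show "dist (Lf y s2) (Lf x s2) < \<epsilon>" using ey hx2 by simp
      qed
    qed
  qed
qed

lemma cd: assumes "s \<in> {0<..1}" shows "CDp x s"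
proof -
  define T where "T = {s\<in>{0<..1::real}. CDp x s}"
  have Tm: "s \<in> T \<longleftrightarrow> s \<in> {0<..1} \<and> CDp x s" for s unfolding T_def by simp
  have "T = {0<..1}"
  proof (rule clopen_metric[OF connected_Ioc])
    show "T \<subseteq> {0<..1}" using Tm by blast
    have "CDp x 1" unfolding CDp_def Lf_one
    proof (intro allI impI)
      fix \<epsilon>::real assume "\<epsilon> > 0"
      then show "\<exists>\<delta>>0. \<forall>y. dist y x < \<delta> \<longrightarrow> dist y x < \<epsilon>" by blast
    qed
    then show "1 \<in> T" using Tm by simp
  next
    fix s assume "s \<in> T"
    then have s: "s \<in> {0<..1}" "CDp x s" using Tm by auto
    obtain \<eta> where \<eta>: "\<eta> > 0" "\<forall>s1\<in>{0<..1}. \<forall>s2\<in>{0<..1}. dist s1 s < \<eta> \<longrightarrow> dist s2 s < \<eta> \<longrightarrow> CDp x s1 \<longrightarrow> CDp x s2"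
      using cd_prop[OF s(1), of x] by blast
    show "\<exists>e>0. \<forall>s'\<in>{0<..1}. dist s' s < e \<longrightarrow> s' \<in> T"
    proof (intro exI conjI ballI impI)
      show "\<eta> > 0" by (rule \<eta>(1))
      fix s' assume s': "s' \<in> {0<..1}" "dist s' s < \<eta>"
      have "dist s s < \<eta>" using \<eta>(1) by simp
      then have "CDp x s'" using \<eta>(2)[rule_format, OF s(1) s'(1) _ s'(2) s(2)] by simp
      then show "s' \<in> T" using s'(1) Tm by simp
    qed
  next
    fix s assume s: "s \<in> {0<..1::real}" "s \<notin> T"
    obtain \<eta> where \<eta>: "\<eta> > 0" "\<forall>s1\<in>{0<..1}. \<forall>s2\<in>{0<..1}. dist s1 s < \<eta> \<longrightarrow> dist s2 s < \<eta> \<longrightarrow> CDp x s1 \<longrightarrow> CDp x s2"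
      using cd_prop[OF s(1), of x] by blast
    show "\<exists>e>0. \<forall>s'\<in>{0<..1}. dist s' s < e \<longrightarrow> s' \<notin> T"
    proof (intro exI conjI ballI impI)
      show "\<eta> > 0" by (rule \<eta>(1))
      fix s' assume s': "s' \<in> {0<..1}" "dist s' s < \<eta>"
      have "dist s s < \<eta>" using \<eta>(1) by simp
      show "s' \<notin> T"
      proof
        assume "s' \<in> T"
        then have "CDp x s'" using Tm by simp
        then have "CDp x s" using \<eta>(2)[rule_format, OF s'(1) s(1) s'(2) \<open>dist s s < \<eta>\<close>] by simp
        then show False using s Tm by simp
      qed
    qed
  qed
  then show ?thesis using assms Tm by blast
qed

lemma inj_main: "inj f"
proof -
  obtain W0 N0 h0 where W0: "open W0" "x0 \<in> W0" "open N0" "homeomorphism W0 N0 f h0"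
    by (rule local_inv2[of x0])
  have fx0N: "f x0 \<in> N0" using W0(2) homeomorphism_image1[OF W0(4)] by (metis imageI)
  obtain r0 where r0: "r0 > 0" "ball (f x0) r0 \<subseteq> N0" using W0(3) fx0N open_contains_ball by blast
  define V0 where "V0 = W0 \<inter> f -` ball (f x0) r0"
  have cf: "\<And>x. continuous (at x) f" using contf[of UNIV] by (simp add: continuous_on_eq_continuous_at)
  have oV0: "open V0" unfolding V0_def
    by (intro open_Int W0(1) continuous_open_vimage[OF open_ball cf])
  have hc: "continuous_on N0 h0" by (rule homeomorphism_cont2[OF W0(4)])
  have V0m: "p \<in> V0 \<longleftrightarrow> p \<in> W0 \<and> dist (f x0) (f p) < r0" for p unfolding V0_def by simp
  have zN: "zz y \<tau> \<in> N0" if "0 \<le> \<tau>" "\<tau> * norm (f y - f x0) < r0" for y \<tau>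
  proof -
    have "dist (f x0) (zz y \<tau>) < r0" using zz_dist0[OF that(1), of y] that(2) by (simp add: dist_commute)
    then show ?thesis using r0(2) by auto
  qed
  have Key: "Lf y \<sigma> = h0 (zz y \<sigma>)"
    if m: "0 < m" "m \<le> 1" "m * norm (f y - f x0) < r0" and s': "s' \<in> {0<..m}" "Lf y s' \<in> V0"
      and \<sigma>: "\<sigma> \<in> {0<..m}" for y m s' \<sigma>
  proof -
    have zyN: "zz y \<tau> \<in> N0" if "\<tau> \<in> {0<..m}" for \<tau>
    proof (rule zN)
      show "0 \<le> \<tau>" using that by simp
      have "\<tau> * norm (f y - f x0) \<le> m * norm (f y - f x0)" using that by (intro mult_right_mono) auto
      then show "\<tau> * norm (f y - f x0) < r0" using m by simp
    qed
    have sub: "{0<..m} \<subseteq> {0<..1}" using m by auto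
    have "Lf y \<sigma> = (h0 \<circ> zz y) \<sigma>"
    proof (rule lift_unique[of "{0<..m}" "Lf y" "h0 \<circ> zz y" s' \<sigma>])
      show "connected {0<..m}" by simp
      show "continuous_on {0<..m} (Lf y)" by (rule continuous_on_subset[OF Lf_cont sub])
      show "continuous_on {0<..m} (h0 \<circ> zz y)"
        by (rule continuous_on_compose[OF zz_cont continuous_on_subset[OF hc]]) (use zyN in auto)
      show "\<forall>s\<in>{0<..m}. f (Lf y s) = f ((h0 \<circ> zz y) s)"
      proof
        fix \<tau> assume \<tau>: "\<tau> \<in> {0<..m}"
        then have "\<tau> \<in> {0<..1}" using sub by blast
        then show "f (Lf y \<tau>) = f ((h0 \<circ> zz y) \<tau>)"
          using Lf_lift homeomorphism_apply2[OF W0(4) zyN[OF \<tau>]] by simp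
      qed
      show "s' \<in> {0<..m}" by (rule s'(1))
      show "\<sigma> \<in> {0<..m}" by (rule \<sigma>)
      have "s' \<in> {0<..1}" using s'(1) sub by blast
      then have fl: "f (Lf y s') = zz y s'" by (rule Lf_lift)
      have W: "Lf y s' \<in> W0" using s'(2) V0m by simp
      show "Lf y s' = (h0 \<circ> zz y) s'"
        using homeomorphism_apply1[OF W0(4) W] fl by simp
    qed
    then show ?thesis by simp
  qed
  have Bwit: "s' * norm (f y - f x0) < r0" if "s' \<in> {0<..1}" "Lf y s' \<in> V0" for y s'
  proof -
    have "dist (f x0) (f (Lf y s')) < r0" using that(2) V0m by simp
    then show ?thesis using Lf_lift[OF that(1)] zz_dist0[of s' y] that(1) by (simp add: dist_commute)
  qed
  define B where "B = {y. \<exists>s\<in>{0<..1}. Lf y s \<in> V0}"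
  have injB: "x = y" if A: "x \<in> B" "y \<in> B" "f x = f y" for x y
  proof -
    obtain sx where sx: "sx \<in> {0<..1}" "Lf x sx \<in> V0" using A(1) unfolding B_def by blast
    obtain sy where sy: "sy \<in> {0<..1}" "Lf y sy \<in> V0" using A(2) unfolding B_def by blast
    define m where "m = min sx sy"
    have m1: "m \<in> {0<..sx}" "m \<in> {0<..sy}" using sx sy unfolding m_def by auto
    have ex: "Lf x m = h0 (zz x m)"
      by (rule Key[of sx x sx]) (use sx Bwit[OF sx] m1 in auto)
    have ey: "Lf y m = h0 (zz y m)"
      by (rule Key[of sy y sy]) (use sy Bwit[OF sy] m1 in auto)
    have "zz x m = zz y m" unfolding zz_def using A(3) by simp
    then have em: "Lf x m = Lf y m" using ex ey by simp
    have "Lf x 1 = Lf y 1"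
    proof (rule lift_unique[of "{0<..1}" "Lf x" "Lf y" m 1])
      show "connected {0<..1::real}" by simp
      show "continuous_on {0<..1} (Lf x)" "continuous_on {0<..1} (Lf y)" by (rule Lf_cont)+
      show "\<forall>s\<in>{0<..1}. f (Lf x s) = f (Lf y s)"
        using Lf_lift A(3) unfolding zz_def by simp
      show "m \<in> {0<..1}" using m1 sx by auto
      show "Lf x m = Lf y m" by (rule em)
      show "(1::real) \<in> {0<..1}" by simp
    qed
    then show ?thesis by (simp add: Lf_one)
  qed
  have x0B: "x0 \<in> B"
  proof -
    have "Lf x0 1 \<in> V0" unfolding Lf_one V0m using W0(2) r0(1) by simp
    then show ?thesis unfolding B_def by force
  qed
  have "B = UNIV"
  proof (rule clopen_metric[OF path_connected_imp_connected[OF path_connected_UNIV] _ x0B])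
    show "B \<subseteq> UNIV" by simp
  next
    fix x assume "x \<in> B"
    then obtain sx where sx: "sx \<in> {0<..1}" "Lf x sx \<in> V0" unfolding B_def by blast
    obtain \<epsilon> where \<epsilon>: "\<epsilon> > 0" "ball (Lf x sx) \<epsilon> \<subseteq> V0" using oV0 sx(2) open_contains_ball by blast
    obtain \<delta> where \<delta>: "\<delta> > 0" "\<forall>y. dist y x < \<delta> \<longrightarrow> dist (Lf y sx) (Lf x sx) < \<epsilon>"
      using cd[OF sx(1), of x] \<epsilon>(1) unfolding CDp_def by blast
    show "\<exists>e>0. \<forall>y\<in>UNIV. dist y x < e \<longrightarrow> y \<in> B"
    proof (intro exI conjI ballI impI)
      show "\<delta> > 0" by (rule \<delta>(1))
      fix y assume "dist y x < \<delta>"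
      then have "dist (Lf y sx) (Lf x sx) < \<epsilon>" using \<delta>(2) by blast
      then have "dist (Lf x sx) (Lf y sx) < \<epsilon>" by (simp add: dist_commute)
      then have "Lf y sx \<in> V0" using \<epsilon>(2) by auto
      then show "y \<in> B" unfolding B_def using sx(1) by blast
    qed
  next
    fix x assume xB: "x \<notin> B"
    show "\<exists>e>0. \<forall>y\<in>UNIV. dist y x < e \<longrightarrow> y \<notin> B"
    proof (rule ccontr)
      assume "\<not> ?thesis"
      then have H: "\<forall>e>0. \<exists>y. dist y x < e \<and> y \<in> B" by blast
      define n where "n = norm (f x - f x0)"
      define s where "s = min 1 (r0 / (2 * (n + 1)))"
      have n0: "n \<ge> 0" unfolding n_def by simp
      have s: "0 < s" "s \<le> 1" unfolding s_def using r0 n0 by auto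
      have sn: "s * n < r0 / 2"
      proof -
        have "s * n \<le> r0 / (2 * (n + 1)) * n" unfolding s_def using n0 by (intro mult_right_mono) auto
        also have "\<dots> < r0 / 2" using r0(1) n0 by (simp add: field_simps)
        finally show ?thesis .
      qed
      have zxN: "zz x s \<in> N0" by (rule zN) (use s sn r0 n_def in auto)
      define q where "q = h0 (zz x s)"
      have Lq: "Lf x s = q"
      proof (rule ccontr)
        assume ne: "Lf x s \<noteq> q"
        define \<epsilon> where "\<epsilon> = dist (Lf x s) q / 2"
        have \<epsilon>: "\<epsilon> > 0" using ne unfolding \<epsilon>_def by simp
        have s01: "s \<in> {0<..1}" using s by simp
        obtain \<delta>1 where \<delta>1: "\<delta>1 > 0" "\<forall>y. dist y x < \<delta>1 \<longrightarrow> dist (Lf y s) (Lf x s) < \<epsilon>"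
          using cd[OF s01, of x] \<epsilon> unfolding CDp_def by blast
        obtain \<epsilon>' where \<epsilon>': "\<epsilon>' > 0" "\<forall>u\<in>N0. dist u (zz x s) < \<epsilon>' \<longrightarrow> dist (h0 u) (h0 (zz x s)) < \<epsilon>"
          using hc[unfolded continuous_on_iff, rule_format, OF zxN \<epsilon>] by blast
        have mpos: "min \<epsilon>' (r0/2) > 0" using \<epsilon>' r0 by simp
        obtain \<delta>2 where \<delta>2: "\<delta>2 > 0" "\<forall>y. dist y x < \<delta>2 \<longrightarrow> dist (f y) (f x) < min \<epsilon>' (r0/2)"
          using cf[of x] mpos unfolding continuous_at_eps_delta by blast
        have "min \<delta>1 \<delta>2 > 0" using \<delta>1 \<delta>2 by simp
        then obtain y where y: "dist y x < min \<delta>1 \<delta>2" "y \<in> B" using H by blast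
        obtain sy where sy: "sy \<in> {0<..1}" "Lf y sy \<in> V0" using y(2) unfolding B_def by blast
        have fyx: "dist (f y) (f x) < min \<epsilon>' (r0/2)" using \<delta>2 y(1) by auto
        have ny: "norm (f y - f x0) \<le> n + dist (f y) (f x)"
        proof -
          have "f y - f x0 = (f y - f x) + (f x - f x0)" by simp
          then have "norm (f y - f x0) \<le> norm (f y - f x) + norm (f x - f x0)"
            by (metis norm_triangle_ineq)
          then show ?thesis unfolding n_def by (simp add: dist_norm)
        qed
        have sny: "s * norm (f y - f x0) < r0"
        proof -
          have "s * norm (f y - f x0) \<le> s * (n + dist (f y) (f x))" using ny s by (intro mult_left_mono) auto
          also have "\<dots> = s * n + s * dist (f y) (f x)" by (simp add: algebra_simps)
          also have "s * dist (f y) (f x) \<le> dist (f y) (f x)" using s by (simp add: mult_left_le_one_le)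
          then have "s * n + s * dist (f y) (f x) < r0/2 + r0/2" using sn fyx by simp
          finally show ?thesis by simp
        qed
        define m where "m = max s sy"
        have m: "0 < m" "m \<le> 1" "m * norm (f y - f x0) < r0"
          using s sy sny Bwit[OF sy] unfolding m_def by (auto simp: max_def)
        have ey: "Lf y s = h0 (zz y s)"
          by (rule Key[OF m, of sy s]) (use sy s m_def in auto)
        have zyN: "zz y s \<in> N0" by (rule zN) (use s sny in auto)
        have "dist (zz y s) (zz x s) \<le> dist (f y) (f x)" using s by (intro zz_dist) auto
        then have "dist (zz y s) (zz x s) < \<epsilon>'" using fyx by simp
        then have d1: "dist (Lf y s) q < \<epsilon>" using \<epsilon>'(2) zyN ey unfolding q_def by auto
        have d2: "dist (Lf y s) (Lf x s) < \<epsilon>" using \<delta>1 y(1) by auto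
        have "dist (Lf x s) q \<le> dist (Lf x s) (Lf y s) + dist (Lf y s) q" by (rule dist_triangle)
        then have "dist (Lf x s) q < 2 * \<epsilon>" using d1 d2 by (simp add: dist_commute)
        then show False unfolding \<epsilon>_def by simp
      qed
      have "q \<in> W0" unfolding q_def using homeomorphism_image2[OF W0(4)] zxN by blast
      moreover have "f q = zz x s" unfolding q_def using homeomorphism_apply2[OF W0(4) zxN] .
      moreover have "dist (f x0) (zz x s) < r0"
        using zz_dist0[of s x] s sn r0(1) unfolding n_def by (simp add: dist_commute)
      ultimately have "Lf x s \<in> V0" using Lq V0m by simp
      then have "x \<in> B" unfolding B_def using s by auto
      then show False using xB by simp
    qed
  qed
  then show ?thesis unfolding inj_def using injB by blast
qed

end

theorem corollary4p2:
  fixes f :: "real ^ 'n \<Rightarrow> real ^ 'n"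
    and f' :: "real ^ 'n \<Rightarrow> real ^ 'n ^ 'n"
    and x0 x1 :: "real ^ 'n"
    and a b c :: real
  assumes deriv: "\<And>x. (f has_derivative (\<lambda>h. f' x *v h)) (at x)"
    and C1: "continuous_on UNIV f'"
    and det_nz: "\<And>x. det (f' x) \<noteq> 0"
    and abc: "a \<ge> 0" "b \<ge> 0" "c \<ge> 0"
    and ineq: "\<And>x. (x - x1) \<bullet> (- (matrix_inv (f' x) *v (f x - f x0)))
                 \<le> a + b * (norm (x - x1))\<^sup>2 + c * (norm (f x - f x0))\<^sup>2"
  shows "inj f"
proof -
  have "nw2 f f' x0 x1 a b c"
    unfolding nw2_def nw2_axioms_def nw_def using deriv C1 det_nz abc ineq by blast
  then show ?thesis by (rule nw2.inj_main)
qed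

end
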